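(* In the setting described in the context, if either ($0<v_0<1$ and $\omega_0<-\frac{\nu}{2}f_\infty(v_0)$) or ($v_0>1$ and $\omega_0>-\frac{\nu}{2}f_\infty(v_0)$), then type B blowup occurs.
   Context: Fix $\nu>0$, $v_0>0$ with $v_0\neq1$, and $\omega_0\in\mathbb{R}$. Consider the real ODE system $\frac{d\omega_{-2,i}}{dt}=\omega_{-2,i}^2\frac{1-2v_c^2+5v_c^4}{4v_c^2(1-v_c^2)^2}-\nu\omega_{-2,i}$, $\frac{dv_c}{dt}=-\omega_{-2,i}\frac{1+v_c^2}{4v_c(1-v_c^2)}$ with $v_c(0)=v_0$, $\omega_{-2,i}(0)=\omega_0$; its solution (continued through $v_c=1$) is characterized as follows. Let $F(v)=\frac{v(v^2-1)}{(v^2+1)^2}+\arctan v$, which is a strictly increasing bijection from $(0,\infty)$ onto $(0,\pi/2)$, and let $G(t)=F(v_0)+\frac{2\omega_0 v_0(1-e^{-\nu t})}{\nu(v_0^2-1)(v_0^2+1)^2}$. Then $v_c(t)$ is defined by $F(v_c(t))=G(t)$ for as long as $G(t)\in(0,\pi/2)$, and $\omega_{-2,i}(t)=\omega_0e^{-\nu t}\frac{v_0}{v_c(t)}\frac{v_c(t)^2-1}{v_0^2-1}\left(\frac{v_c(t)^2+1}{v_0^2+1}\right)^2$. Type A blowup means: there is a finite $t_c>0$ with $v_c(t)>0$ on $[0,t_c)$ and $v_c(t)\to0^+$ as $t\to t_c^-$. Type B blowup means: there is a finite $t_c>0$ with $v_c(t)\in(0,\infty)$ on $[0,t_c)$ and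 $v_c(t)\to+\infty$ as $t\to t_c^-$. Here $f_0(x)=(x^2-1)^2+\frac{(x^2+1)^2}{x}(x^2-1)\arctan(x)$ and $f_\infty(x)=(x^2-1)^2+\frac{(x^2+1)^2}{x}(x^2-1)\left(\arctan(x)-\frac{\pi}{2}\right)$ for $x>0$. *)

theory Defs
  imports "HOL-Analysis.Analysis"
begin

definition F :: "real \<Rightarrow> real" where
  "F v = v * (v^2 - 1) / (v^2 + 1)^2 + arctan v"

definition G :: "real \<Rightarrow> real \<Rightarrow> real \<Rightarrow> real \<Rightarrow> real" where
  "G \<nu> v0 \<omega>0 t = F v0 + 2 * \<omega>0 * v0 * (1 - exp (- \<nu> * t))
      / (\<nu> * (v0^2 - 1) * (v0^2 + 1)^2)"

text \<open>The solution v_c(t): the unique v > 0 with F v = G t (meaningful while G t lies in (0, pi/2)).\<close>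
definition vc :: "real \<Rightarrow> real \<Rightarrow> real \<Rightarrow> real \<Rightarrow> real" where
  "vc \<nu> v0 \<omega>0 t = (THE v. v > 0 \<and> F v = G \<nu> v0 \<omega>0 t)"

definition f_inf :: "real \<Rightarrow> real" where
  "f_inf x = (x^2 - 1)^2 + (x^2 + 1)^2 / x * (x^2 - 1) * (arctan x - pi / 2)"

definition type_B_blowup :: "real \<Rightarrow> real \<Rightarrow> real \<Rightarrow> bool" where
  "type_B_blowup \<nu> v0 \<omega>0 \<longleftrightarrow>
     (\<exists>tc > 0. (\<forall>t \<in> {0..<tc}. 0 < G \<nu> v0 \<omega>0 t \<and> G \<nu> v0 \<omega>0 t < pi / 2)
        \<and> filterlim (vc \<nu> v0 \<omega>0) at_top (at_left tc))"

end

theory Submission imports Defs "HOL-Real_Asymp.Real_Asymp" begin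
lemma F_deriv: "(F has_real_derivative (8*x^2/(x^2+1)^3)) (at x)"
proof -
  have p0: "x^2+1 > (0::real)" by (simp add: add_nonneg_pos)
  have p: "x^2+1 \<noteq> (0::real)" "1+x^2 \<noteq> (0::real)" "(x^2+1)^2 \<noteq> (0::real)" using p0 by auto
  show ?thesis
    unfolding F_def[abs_def]
    apply (rule derivative_eq_intros refl)+
    apply (simp add: p)
    apply (rule refl)
    apply (rule DERIV_arctan)
    using p apply (simp add: divide_simps)
    apply (simp add: eval_nat_numeral algebra_simps)
    done
qed

lemma F_lim: "(F \<longlongrightarrow> pi/2) at_top"
  unfolding F_def[abs_def] by real_asymp

lemma F_isCont: "isCont F x"
  using F_deriv DERIV_isCont by blast

lemma F_mono: assumes "0 \<le> a" "a < b" shows "F a < F b"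
proof (rule DERIV_pos_imp_increasing_open[OF assms(2)])
  fix x assume "a < x" "x < b"
  then have "x > 0" using assms by linarith
  then have "8*x^2/(x^2+1)^3 > (0::real)" by (simp add: add_nonneg_pos)
  then show "\<exists>y. (F has_real_derivative y) (at x) \<and> 0 < y" using F_deriv by blast
next
  show "continuous_on {a..b} F" using F_isCont by (simp add: continuous_at_imp_continuous_on)
qed

lemma F0: "F 0 = 0" by (simp add: F_def)

lemma F_pos: "0 < v \<Longrightarrow> 0 < F v" using F_mono[of 0 v] F0 by simp

lemma F_lt: assumes "0 \<le> v" shows "F v < pi/2"
proof -
  have "F (v+1) \<le> pi/2"
  proof (rule tendsto_lowerbound[OF F_lim])
    show "\<forall>\<^sub>F y in at_top. F (v+1) \<le> F y"
      using eventually_ge_at_top[of "v+1"]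
    proof (rule eventually_mono)
      fix x assume "v+1 \<le> x" then show "F (v+1) \<le> F x" using F_mono[of "v+1" x] assms by (cases "v+1 = x") auto
    qed
  qed simp
  moreover have "F v < F (v+1)" using F_mono assms by simp
  ultimately show ?thesis by simp
qed

lemma F_ex: assumes "0 < y" "y < pi/2" shows "\<exists>v>0. F v = y"
proof -
  have "\<forall>\<^sub>F x in at_top. y < F x" using order_tendstoD(1)[OF F_lim assms(2)] .
  moreover have "\<forall>\<^sub>F x in at_top. (0::real) \<le> x" by (rule eventually_ge_at_top)
  ultimately have "\<forall>\<^sub>F x in at_top. y < F x \<and> 0 \<le> x" by (rule eventually_conj)
  then obtain N where N: "\<forall>x\<ge>N. y < F x \<and> 0 \<le> x" by (auto simp: eventually_at_top_linorder)
  then have b: "y < F N" "0 \<le> N" by auto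
  have "\<exists>x\<ge>0. x \<le> N \<and> F x = y"
    by (rule IVT') (use b assms F0 F_isCont in \<open>auto intro: continuous_at_imp_continuous_on\<close>)
  then obtain x where "x \<ge> 0" "F x = y" by blast
  moreover have "x \<noteq> 0" using F0 assms \<open>F x = y\<close> by auto
  ultimately show ?thesis by (intro exI[of _ x]) auto
qed

lemma vc_prop: assumes "0 < G \<nu> v0 \<omega>0 t" "G \<nu> v0 \<omega>0 t < pi/2"
  shows "vc \<nu> v0 \<omega>0 t > 0 \<and> F (vc \<nu> v0 \<omega>0 t) = G \<nu> v0 \<omega>0 t"
  unfolding vc_def
proof (rule theI')
  obtain v where v: "v > 0" "F v = G \<nu> v0 \<omega>0 t" using F_ex assms by blast
  show "\<exists>!v. v > 0 \<and> F v = G \<nu> v0 \<omega>0 t"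
  proof (rule ex1I[of _ v])
    show "v > 0 \<and> F v = G \<nu> v0 \<omega>0 t" using v by simp
    fix w assume w: "w > 0 \<and> F w = G \<nu> v0 \<omega>0 t"
    show "w = v"
    proof (rule ccontr)
      assume "w \<noteq> v"
      then have "w < v \<or> v < w" by auto
      then show False using F_mono[of w v] F_mono[of v w] v w by auto
    qed
  qed
qed

theorem lemma3p6:
  fixes \<nu> v0 \<omega>0 :: real
  assumes "\<nu> > 0" and "v0 > 0" and "v0 \<noteq> 1"
    and "(0 < v0 \<and> v0 < 1 \<and> \<omega>0 < - \<nu> / 2 * f_inf v0) \<or> (v0 > 1 \<and> \<omega>0 > - \<nu> / 2 * f_inf v0)"
  shows "type_B_blowup \<nu> v0 \<omega>0"
proof -
  note nu = assms(1) and v0 = assms(2)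
  define c where "c = 2 * \<omega>0 * v0 / (\<nu> * (v0^2 - 1) * (v0^2 + 1)^2)"
  define d where "d = pi/2 - F v0"
  define D where "D = (v0^2 - 1) * (v0^2 + 1)^2 / v0"
  have p1: "v0^2 + 1 > 0" by (simp add: add_nonneg_pos)
  have p2: "v0^2 - 1 \<noteq> 0" using assms(2,3)
    by (auto simp: power2_eq_1_iff)
  have d_pos: "d > 0" using F_lt[of v0] v0 unfolding d_def by simp
  have cD: "c * D = 2 * \<omega>0 / \<nu>" unfolding c_def D_def using nu v0 p1 p2
    by (simp add: field_simps)
  have dD0: "(- a - v0 * (v0^2 - 1) / (v0^2 + 1)^2) * ((v0^2 - 1) * (v0^2 + 1)^2 / v0)
      = - ((v0^2 - 1)^2 + (v0^2 + 1)^2 / v0 * (v0^2 - 1) * a)" for a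
  proof -
    have q: "(v0^2 + 1)^2 \<noteq> 0" "v0 \<noteq> 0" using p1 v0 by auto
    show ?thesis using q by (simp add: divide_simps) (simp add: eval_nat_numeral algebra_simps)
  qed
  have dD: "d * D = - f_inf v0" unfolding d_def D_def f_inf_def F_def
    using dD0[of "arctan v0 - pi/2"] by (simp add: algebra_simps)
  have cd: "c > d"
    using assms(4)
  proof
    assume h: "0 < v0 \<and> v0 < 1 \<and> \<omega>0 < - \<nu> / 2 * f_inf v0"
    then have "v0^2 < 1" by (simp add: power_less_one_iff)
    then have "D < 0" unfolding D_def using p1 v0 by (simp add: divide_neg_pos mult_neg_pos)
    moreover have "c * D < d * D" unfolding cD dD using h nu by (simp add: field_simps)
    ultimately show "c > d" by (simp add: mult_less_cancel_right)
  next
    assume h: "v0 > 1 \<and> \<omega>0 > - \<nu> / 2 * f_inf v0"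
    then have "v0^2 > 1" by (simp add: one_less_power)
    then have "D > 0" unfolding D_def using p1 v0 by simp
    moreover have "c * D > d * D" unfolding cD dD using h nu by (simp add: field_simps)
    ultimately show "c > d" by (simp add: mult_less_cancel_right)
  qed
  have c_pos: "c > 0" using cd d_pos by linarith
  have Geq: "\<And>t. G \<nu> v0 \<omega>0 t = F v0 + c * (1 - exp (- \<nu> * t))"
    unfolding G_def c_def by simp
  define r where "r = 1 - d / c"
  have r0: "0 < r" using cd c_pos unfolding r_def by (simp add: field_simps)
  have r1: "r < 1" using d_pos c_pos unfolding r_def by simp
  define tc where "tc = - ln r / \<nu>"
  have "ln r < 0" using r0 r1 by simp
  have tc_pos: "tc > 0" unfolding tc_def using \<open>ln r < 0\<close> nu by (simp add: divide_neg_pos)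
  have etc: "exp (- \<nu> * tc) = r" unfolding tc_def using nu r0 by simp
  have Gtc: "G \<nu> v0 \<omega>0 tc = pi/2" unfolding Geq etc r_def d_def using c_pos by (simp add: field_simps)
  have Gin: "0 < G \<nu> v0 \<omega>0 t \<and> G \<nu> v0 \<omega>0 t < pi / 2" if "0 \<le> t" "t < tc" for t
  proof -
    have "exp (- \<nu> * t) \<le> 1" using that nu by simp
    moreover have "exp (- \<nu> * t) > r"
    proof -
      have "- \<nu> * tc < - \<nu> * t" using that nu by simp
      then show ?thesis using etc by (metis exp_less_cancel_iff)
    qed
    ultimately have "c * (1 - exp (- \<nu> * t)) \<ge> 0" "c * (1 - exp (- \<nu> * t)) < c * (1 - r)"
      using c_pos by auto
    moreover have "c * (1 - r) = d" unfolding r_def using c_pos by simp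
    ultimately show ?thesis unfolding Geq d_def using F_pos[OF v0] by linarith
  qed
  have Glim: "(G \<nu> v0 \<omega>0 \<longlongrightarrow> pi/2) (at_left tc)"
  proof -
    have "((\<lambda>t. F v0 + c * (1 - exp (- \<nu> * t))) \<longlongrightarrow> F v0 + c * (1 - exp (- \<nu> * tc))) (at_left tc)"
      by (intro tendsto_intros)
    then show ?thesis unfolding Geq[symmetric] Gtc by (simp add: Geq[abs_def])
  qed
  have "filterlim (vc \<nu> v0 \<omega>0) at_top (at_left tc)"
    unfolding filterlim_at_top
  proof
    fix Z :: real
    define M where "M = max Z 1"
    have "F M < pi/2" using F_lt[of M] unfolding M_def by simp
    then have ev1: "\<forall>\<^sub>F t in at_left tc. F M < G \<nu> v0 \<omega>0 t" using order_tendstoD(1)[OF Glim] by blast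
    have ev2: "\<forall>\<^sub>F t in at_left tc. t \<in> {0<..<tc}" using eventually_at_left_real[OF tc_pos] .
    show "\<forall>\<^sub>F t in at_left tc. Z \<le> vc \<nu> v0 \<omega>0 t"
      using ev1 ev2
    proof eventually_elim
      case (elim t)
      then have "0 < G \<nu> v0 \<omega>0 t \<and> G \<nu> v0 \<omega>0 t < pi / 2" using Gin by auto
      from vc_prop[OF conjunct1[OF this] conjunct2[OF this]]
      have v: "vc \<nu> v0 \<omega>0 t > 0" "F (vc \<nu> v0 \<omega>0 t) = G \<nu> v0 \<omega>0 t" by auto
      have "M < vc \<nu> v0 \<omega>0 t"
      proof (rule ccontr)
        assume "\<not> M < vc \<nu> v0 \<omega>0 t"
        then have "vc \<nu> v0 \<omega>0 t \<le> M" by simp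
        then have "F (vc \<nu> v0 \<omega>0 t) \<le> F M" using F_mono[of "vc \<nu> v0 \<omega>0 t" M] v(1)
          by (cases "vc \<nu> v0 \<omega>0 t = M") auto
        then show False using v elim by simp
      qed
      then show ?case unfolding M_def by simp
    qed
  qed
  then show ?thesis unfolding type_B_blowup_def using tc_pos Gin by auto
qed

end
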